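(* Every cyclic triangulation of a closed surface is $q$-equivelar for some $q$ with either $q=3k$ or $q=3k+1$ for some integer $k\ge 1$.
   Context: For an integer $n\ge 3$ identify a vertex set with $\mathbb{Z}_n=\{0,1,\dots,n-1\}$. A cyclic triangulation with $n$ vertices is a simplicial complex on the vertex set $\mathbb{Z}_n$ that triangulates a closed (compact, connected, boundaryless) surface and is invariant under the shift $i\mapsto i+1$. A triangulation is $q$-equivelar if every vertex lies in exactly $q$ triangles. *)

theory Defs
  imports Main
begin

text \<open>A 2-dimensional simplicial complex on vertex set Z_n = {0..<n} is given by its
set F of facets (triangles, 3-element subsets of {0..<n}). It triangulates a closed
surface (combinatorial closed 2-manifold) iff: every vertex of Z_n lies in a triangle,
every edge lies in exactly two triangles, the link of every vertex is connected
(hence a cycle), and the complex is connected.\<close>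

definition shift :: "nat \<Rightarrow> nat set \<Rightarrow> nat set" where
  "shift n T = (\<lambda>x. (x + 1) mod n) ` T"

definition closed_surface_triangulation :: "nat \<Rightarrow> nat set set \<Rightarrow> bool" where
  "closed_surface_triangulation n F \<longleftrightarrow>
     (\<forall>T\<in>F. T \<subseteq> {0..<n} \<and> card T = 3)
   \<and> (\<forall>v<n. \<exists>T\<in>F. v \<in> T)
   \<and> (\<forall>T\<in>F. \<forall>e. e \<subseteq> T \<and> card e = 2 \<longrightarrow> card {S\<in>F. e \<subseteq> S} = 2)
   \<and> (\<forall>v<n. \<forall>a\<in>\<Union>{S\<in>F. v \<in> S} - {v}. \<forall>b\<in>\<Union>{S\<in>F. v \<in> S} - {v}.
          (\<lambda>x y. {v, x, y} \<in> F)\<^sup>*\<^sup>* a b)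
   \<and> (\<forall>u<n. \<forall>w<n. (\<lambda>x y. \<exists>T\<in>F. x \<in> T \<and> y \<in> T)\<^sup>*\<^sup>* u w)"

definition cyclic_triangulation :: "nat \<Rightarrow> nat set set \<Rightarrow> bool" where
  "cyclic_triangulation n F \<longleftrightarrow> 3 \<le> n \<and> closed_surface_triangulation n F
     \<and> (\<forall>T\<in>F. shift n T \<in> F)"

definition equivelar :: "nat \<Rightarrow> nat set set \<Rightarrow> nat \<Rightarrow> bool" where
  "equivelar n F q \<longleftrightarrow> (\<forall>v<n. card {T\<in>F. v \<in> T} = q)"

end

theory Submission
  imports Defs
begin

lemma mod3_lemma:
  assumes "finite S" "\<forall>x\<in>S. f x \<in> S \<and> f (f (f x)) = x"
  shows "card S mod 3 = card {x\<in>S. f x = x} mod 3"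
  using assms
proof (induction "card S" arbitrary: S rule: less_induct)
  case less
  show ?case
  proof (cases "\<forall>x\<in>S. f x = x")
    case True
    then have "{x\<in>S. f x = x} = S" by auto
    then show ?thesis by simp
  next
    case False
    then obtain x where x: "x \<in> S" "f x \<noteq> x" by auto
    have fx: "f x \<in> S" "f (f x) \<in> S" "f (f (f x)) = x" using less.prems x by auto
    have d1: "f (f x) \<noteq> x" using fx x by metis
    have d2: "f (f x) \<noteq> f x" using fx x by metis
    define Orb where "Orb = {x, f x, f (f x)}"
    have cO: "card Orb = 3" using x d1 d2 by (simp add: Orb_def)
    have OS: "Orb \<subseteq> S" using x fx by (simp add: Orb_def)
    define S' where "S' = S - Orb"
    have fin': "finite S'" using less.prems by (simp add: S'_def)
    have cS: "card S = card S' + 3"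
      proof -
      have "card S' = card S - card Orb" using OS less.prems(1) finite_subset[OF OS] by (simp add: S'_def card_Diff_subset)
      moreover have "card Orb \<le> card S" using OS less.prems(1) by (simp add: card_mono)
      ultimately show ?thesis using cO by simp
    qed
    have inv: "\<forall>y\<in>S'. f y \<in> S' \<and> f (f (f y)) = y"
    proof
      fix y assume y: "y \<in> S'"
      have y3: "f (f (f y)) = y" "f y \<in> S" using y less.prems by (auto simp: S'_def)
      have "y \<notin> Orb" using y by (simp add: S'_def)
      have "f y \<notin> Orb"
      proof
        assume "f y \<in> Orb"
        then have "f y = x \<or> f y = f x \<or> f y = f (f x)" by (simp add: Orb_def)
        then have "y = f (f x) \<or> y = x \<or> y = f x"
        proof (elim disjE)
          assume "f y = x" then have "f (f (f y)) = f (f x)" by simp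
          then show ?thesis using y3 by simp
        next
          assume "f y = f x" then have "f (f (f y)) = f (f (f x))" by simp
          then show ?thesis using y3 fx by simp
        next
          assume "f y = f (f x)" then have "f (f (f y)) = f (f (f (f x)))" by simp
          then show ?thesis using y3 fx by simp
        qed
        then have "y \<in> Orb" by (auto simp: Orb_def)
        then show False using \<open>y \<notin> Orb\<close> by simp
      qed
      then show "f y \<in> S' \<and> f (f (f y)) = y" using y3 by (simp add: S'_def)
    qed
    have fixeq: "{y\<in>S. f y = y} = {y\<in>S'. f y = y}"
      using x d1 d2 fx by (auto simp: S'_def Orb_def)
    have "card S' mod 3 = card {y\<in>S'. f y = y} mod 3"
      using less.hyps[of S'] cS fin' inv by simp
    then show ?thesis using cS fixeq by simp
  qed
qed

definition shk :: "nat \<Rightarrow> nat \<Rightarrow> nat set \<Rightarrow> nat set" where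
  "shk n k T = (\<lambda>x. (x + k) mod n) ` T"

lemma shk_F:
  assumes "cyclic_triangulation n F" "T \<in> F"
  shows "shk n k T \<in> F"
proof (induction k)
  case 0
  have "T \<subseteq> {0..<n}" using assms by (auto simp: cyclic_triangulation_def closed_surface_triangulation_def)
  then have "(\<lambda>x. (x + 0) mod n) ` T = (\<lambda>x. x) ` T"
    by (intro image_cong[OF refl]) auto
  then have "shk n 0 T = T" unfolding shk_def by simp
  then show ?case using assms by simp
next
  case (Suc k)
  have "shift n (shk n k T) = shk n (Suc k) T"
    unfolding shift_def shk_def image_image by (simp add: mod_Suc_eq)
  moreover have "shift n (shk n k T) \<in> F" using Suc assms by (simp add: cyclic_triangulation_def)
  ultimately show ?case by simp
qed

lemma shk_shk:
  assumes "T \<subseteq> {0..<n}" "v \<le> n"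
  shows "shk n (n - v) (shk n v T) = T" "shk n v (shk n (n - v) T) = T"
proof -
  have a: "((x + v) mod n + (n - v)) mod n = x" if "x < n" for x
  proof -
    have "((x + v) mod n + (n - v)) mod n = (x + v + (n - v)) mod n" by (simp add: mod_add_left_eq)
    also have "x + v + (n - v) = x + n" using assms by simp
    finally show ?thesis using that by simp
  qed
  have b: "((x + (n - v)) mod n + v) mod n = x" if "x < n" for x
  proof -
    have "((x + (n - v)) mod n + v) mod n = (x + (n - v) + v) mod n" by (simp add: mod_add_left_eq)
    also have "x + (n - v) + v = x + n" using assms by simp
    finally show ?thesis using that by simp
  qed
  have ia: "(\<lambda>x. ((x + v) mod n + (n - v)) mod n) ` T = (\<lambda>x. x) ` T"
    by (rule image_cong[OF refl]) (use a assms(1) in auto)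
  have ib: "(\<lambda>x. ((x + (n - v)) mod n + v) mod n) ` T = (\<lambda>x. x) ` T"
    by (rule image_cong[OF refl]) (use b assms(1) in auto)
  show "shk n (n - v) (shk n v T) = T" unfolding shk_def image_image ia by simp
  show "shk n v (shk n (n - v) T) = T" unfolding shk_def image_image ib by simp
qed

theorem mainTheorem4:
  fixes n :: nat and F :: "nat set set"
  assumes "cyclic_triangulation n F"
  shows "\<exists>q. equivelar n F q \<and> (\<exists>k::nat. k \<ge> 1 \<and> (q = 3 * k \<or> q = 3 * k + 1))"
proof -
  have n3: "3 \<le> n" using assms by (simp add: cyclic_triangulation_def)
  have cs: "closed_surface_triangulation n F" using assms by (simp add: cyclic_triangulation_def)
  have Fsub: "\<And>T. T \<in> F \<Longrightarrow> T \<subseteq> {0..<n} \<and> card T = 3"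
    using cs by (simp add: closed_surface_triangulation_def)
  have finF: "finite F"
    by (rule finite_subset[of F "Pow {0..<n}"]) (auto dest: Fsub)
  define A where "A v = {T\<in>F. v \<in> T}" for v
  have finA: "finite (A v)" for v using finF by (simp add: A_def)
  have deg: "card (A v) = card (A 0)" if "v < n" for v
  proof -
    have "bij_betw (shk n v) (A 0) (A v)"
    proof (rule bij_betw_byWitness[where f' = "shk n (n - v)"])
      show "\<forall>T\<in>A 0. shk n (n - v) (shk n v T) = T" using shk_shk Fsub that by (simp add: A_def)
      show "\<forall>T\<in>A v. shk n v (shk n (n - v) T) = T" using shk_shk Fsub that by (simp add: A_def)
      show "shk n v ` A 0 \<subseteq> A v"
      proof
        fix S assume "S \<in> shk n v ` A 0"
        then obtain T where T: "T \<in> F" "0 \<in> T" "S = shk n v T" by (auto simp: A_def)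
        have "(0 + v) mod n = v" using that by simp
        then have "v \<in> S" using T unfolding shk_def by (metis image_eqI)
        then show "S \<in> A v" using shk_F[OF assms T(1)] T by (simp add: A_def)
      qed
      show "shk n (n - v) ` A v \<subseteq> A 0"
      proof
        fix S assume "S \<in> shk n (n - v) ` A v"
        then obtain T where T: "T \<in> F" "v \<in> T" "S = shk n (n - v) T" by (auto simp: A_def)
        have "(v + (n - v)) mod n = 0" using that by simp
        then have "0 \<in> S" using T unfolding shk_def by (metis image_eqI)
        then show "S \<in> A 0" using shk_F[OF assms T(1)] T by (simp add: A_def)
      qed
    qed
    then show ?thesis by (simp add: bij_betw_same_card)
  qed
  define P where "P = {(a, b). 0 < a \<and> a < b \<and> b < n \<and> {0, a, b} \<in> F}"
  define g where "g = (\<lambda>(a::nat, b::nat). {0::nat, a, b})"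
  have bij: "bij_betw g P (A 0)"
    unfolding bij_betw_def
  proof
    show "inj_on g P"
    proof (rule inj_onI)
      fix p p' assume "p \<in> P" "p' \<in> P" "g p = g p'"
      then obtain a b a' b' where "p = (a,b)" "p' = (a',b')" "0<a" "a<b" "0<a'" "a'<b'"
        "{0,a,b} = {0::nat,a',b'}" by (auto simp: P_def g_def)
      then show "p = p'"
      proof -
        assume h: "p = (a,b)" "p' = (a',b')" "0<a" "a<b" "0<a'" "a'<b'" "{0,a,b} = {0::nat,a',b'}"
        have "a \<in> {0,a',b'}" "b \<in> {0,a',b'}" "a' \<in> {0,a,b}" "b' \<in> {0,a,b}" using h(7) by (metis insertI1 insertI2)+
        then have "a = a' \<or> a = b'" "b = a' \<or> b = b'" "a' = a \<or> a' = b" "b' = a \<or> b' = b"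
          using h(3-6) by auto
        then have "a = a'" "b = b'" using h(3-6) by linarith+
        then show ?thesis using h by simp
      qed
    qed
    show "g ` P = A 0"
    proof
      show "g ` P \<subseteq> A 0" by (auto simp: P_def g_def A_def)
      show "A 0 \<subseteq> g ` P"
      proof
        fix T assume T: "T \<in> A 0"
        then have T1: "T \<in> F" "0 \<in> T" by (auto simp: A_def)
        have "card (T - {0}) = 2" using Fsub[OF T1(1)] T1 by simp
        then obtain x y where xy: "T - {0} = {x, y}" "x \<noteq> y" by (auto simp: card_2_iff)
        have Teq: "T = {0, x, y}" using xy T1 by auto
        have "x \<in> T - {0}" "y \<in> T - {0}" using xy(1) by simp_all
        then have "x \<in> T" "y \<in> T" "x \<noteq> 0" "y \<noteq> 0" by simp_all
        then have "x < n" "y < n" "x \<noteq> 0" "y \<noteq> 0" using Fsub[OF T1(1)] by (auto simp del: One_nat_def)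
        show "T \<in> g ` P"
        proof (cases "x < y")
          case True
          then show ?thesis using Teq T1 \<open>x < n\<close> \<open>y < n\<close> \<open>x \<noteq> 0\<close>
            by (auto simp: P_def g_def image_iff intro!: bexI[of _ "(x,y)"])
        next
          case False
          then have "y < x" using xy by simp
          moreover have "T = {0, y, x}" using Teq by auto
          ultimately show ?thesis using T1 \<open>x < n\<close> \<open>y \<noteq> 0\<close>
            by (auto simp: P_def g_def image_iff intro!: bexI[of _ "(y,x)"])
        qed
      qed
    qed
  qed
  have cardA: "card (A 0) = card P" using bij by (simp add: bij_betw_same_card)
  have finP: "finite P"
    by (rule finite_subset[of P "{0..<n} \<times> {0..<n}"]) (auto simp: P_def)
  define r where "r = (\<lambda>p::nat\<times>nat. (snd p - fst p, n - fst p))"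
  have rinv: "\<forall>p\<in>P. r p \<in> P \<and> r (r (r p)) = p"
  proof
    fix p assume "p \<in> P"
    then obtain a b where p: "p = (a,b)" "0 < a" "a < b" "b < n" "{0,a,b} \<in> F" by (auto simp: P_def)
    have "shk n (n - a) {0,a,b} \<in> F" using shk_F[OF assms p(5)] .
    moreover have "shk n (n - a) {0,a,b} = {0, b - a, n - a}"
    proof -
      have "(0 + (n - a)) mod n = n - a" using p by simp
      moreover have "(a + (n - a)) mod n = 0" using p by simp
      moreover have "(b + (n - a)) mod n = b - a"
      proof -
        have "b + (n - a) = (b - a) + n" using p by simp
        then have "(b + (n - a)) mod n = ((b - a) + n) mod n" by (rule arg_cong)
        also have "\<dots> = (b - a) mod n" by (rule mod_add_self2)
        also have "\<dots> = b - a" using p by (intro mod_less) linarith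
        finally show ?thesis .
      qed
      ultimately show ?thesis by (auto simp: shk_def)
    qed
    ultimately have "r p \<in> P" using p by (auto simp: P_def r_def)
    moreover have "r (r (r p)) = p" using p by (simp add: r_def)
    ultimately show "r p \<in> P \<and> r (r (r p)) = p" by simp
  qed
  have m3: "card P mod 3 = card {p\<in>P. r p = p} mod 3" using mod3_lemma[OF finP rinv] .
  have "{p\<in>P. r p = p} \<subseteq> {(n div 3, 2 * (n div 3))}"
  proof
    fix p assume "p \<in> {p\<in>P. r p = p}"
    then obtain a b where ab: "p = (a, b)" "a < b" "b < n" "b - a = a" "n - a = b"
      by (auto simp: P_def r_def)
    then have "n = 3 * a" "b = 2 * a" by linarith+
    then have "a = n div 3" "b = 2 * (n div 3)" by simp_all
    then show "p \<in> {(n div 3, 2 * (n div 3))}" using ab by simp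
  qed
  then have "card {p\<in>P. r p = p} \<le> card {(n div 3, 2 * (n div 3))}"
    by (rule card_mono[rotated]) simp
  then have "card {p\<in>P. r p = p} \<le> 1" by simp
  then have mod01: "card (A 0) mod 3 = 0 \<or> card (A 0) mod 3 = 1" using m3 cardA by auto
  have ge2: "card (A 0) \<ge> 2"
  proof -
    have "\<forall>v<n. \<exists>T\<in>F. v \<in> T" using cs by (simp add: closed_surface_triangulation_def)
    moreover have "(0::nat) < n" using n3 by simp
    ultimately obtain T where T: "T \<in> F" "0 \<in> T" by blast
    have "card (T - {0}) = 2" using Fsub[OF T(1)] T by simp
    then obtain x y where xy: "T - {0} = {x, y}" "x \<noteq> y" by (auto simp: card_2_iff)
    have "x \<in> T - {0}" using xy(1) by simp
    then have "{0, x} \<subseteq> T" "card {0::nat, x} = 2" using T(2) by auto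
    moreover have "\<forall>T\<in>F. \<forall>e. e \<subseteq> T \<and> card e = 2 \<longrightarrow> card {S\<in>F. e \<subseteq> S} = 2"
      using cs by (simp add: closed_surface_triangulation_def)
    ultimately have "card {S\<in>F. {0,x} \<subseteq> S} = 2" using T by blast
    moreover have "{S\<in>F. {0,x} \<subseteq> S} \<subseteq> A 0" by (auto simp: A_def)
    then have "card {S\<in>F. {0,x} \<subseteq> S} \<le> card (A 0)" by (rule card_mono[OF finA])
    ultimately show ?thesis by linarith
  qed
  have eq: "equivelar n F (card (A 0))"
    unfolding equivelar_def
  proof (intro allI impI)
    fix v assume "v < n"
    from deg[OF this] show "card {T\<in>F. v \<in> T} = card (A 0)" by (simp only: A_def)
  qed
  have "\<exists>k::nat. k \<ge> 1 \<and> (card (A 0) = 3 * k \<or> card (A 0) = 3 * k + 1)"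
  proof (intro exI[of _ "card (A 0) div 3"])
    have e: "card (A 0) = 3 * (card (A 0) div 3) + card (A 0) mod 3" by simp
    show "1 \<le> card (A 0) div 3 \<and> (card (A 0) = 3 * (card (A 0) div 3) \<or> card (A 0) = 3 * (card (A 0) div 3) + 1)"
      using mod01 ge2 e by linarith
  qed
  then show ?thesis using eq by blast
qed

end
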